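(* Let $a,b\in\mathbb{Z}$ with $b$ a perfect square, and suppose $\mathcal{F}(x)=x^8+ax^4+b$ is monogenic. Then $b=1$. Consequently, since the groups 8T11 and 8T22 arise as Galois groups of irreducible $\mathcal{F}$ only when $b$ is a square and $\sqrt b$ is not a square, there is no monogenic $\mathcal{F}(x)$ whose Galois group is 8T11 or 8T22.
   Context: A monic polynomial $f(x)\in\mathbb{Z}[x]$ is monogenic if it is irreducible over $\mathbb{Q}$ and $\mathbb{Z}[\theta]$ is the ring of integers of $\mathbb{Q}(\theta)$, $f(\theta)=0$. 8T$X$ is the $X$-th transitive subgroup of $S_8$ in the standard numbering; 8T11 $\cong C_4\circ D_4$, 8T22 $\cong D_4\circ D_4$. Galois groups are over $\mathbb{Q}$. *)

theory Defs
  imports "HOL-Computational_Algebra.Computational_Algebra" Complex_Main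
begin

definition int_adjoin :: "complex \<Rightarrow> complex set" where
  "int_adjoin \<theta> = {poly (map_poly of_int p) \<theta> | p :: int poly. True}"

text \<open>Q(theta) (for algebraic theta, Q[theta] = Q(theta)).\<close>
definition rat_adjoin :: "complex \<Rightarrow> complex set" where
  "rat_adjoin \<theta> = {poly (map_poly of_rat p) \<theta> | p :: rat poly. True}"

definition ring_of_integers :: "complex \<Rightarrow> complex set" where
  "ring_of_integers \<theta> = {x \<in> rat_adjoin \<theta>. algebraic_int x}"

definition monogenic :: "int poly \<Rightarrow> bool" where
  "monogenic f \<longleftrightarrow> lead_coeff f = 1 \<and>
     irreducible (map_poly (of_int :: int \<Rightarrow> rat) f) \<and>
     (\<forall>\<theta>::complex. poly (map_poly of_int f) \<theta> = 0 \<longrightarrow>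
        int_adjoin \<theta> = ring_of_integers \<theta>)"

definition F_poly :: "int \<Rightarrow> int \<Rightarrow> int poly" where
  "F_poly a b = [:b, 0, 0, 0, a, 0, 0, 0, 1:]"

end

theory Submission
  imports Defs "HOL-Computational_Algebra.Field_as_Ring"
begin

lemma map_rat_add: "map_poly (of_rat :: rat \<Rightarrow> complex) (p + q) = map_poly of_rat p + map_poly of_rat q"
  by (simp add: poly_eq_iff coeff_map_poly of_rat_add)

lemma map_rat_diff: "map_poly (of_rat :: rat \<Rightarrow> complex) (p - q) = map_poly of_rat p - map_poly of_rat q"
  by (simp add: poly_eq_iff coeff_map_poly of_rat_diff)

lemma map_rat_mult: "map_poly (of_rat :: rat \<Rightarrow> complex) (p * q) = map_poly of_rat p * map_poly of_rat q"
  by (simp add: poly_eq_iff coeff_map_poly coeff_mult of_rat_sum of_rat_mult)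

lemma map_int_add: "map_poly (of_int :: int \<Rightarrow> complex) (p + q) = map_poly of_int p + map_poly of_int q"
  by (simp add: poly_eq_iff coeff_map_poly)

lemma map_int_mult: "map_poly (of_int :: int \<Rightarrow> complex) (p * q) = map_poly of_int p * map_poly of_int q"
  by (simp add: poly_eq_iff coeff_map_poly coeff_mult)

lemma irred_deg:
  fixes f D :: "rat poly" and \<theta> :: complex
  assumes irr: "irreducible f" and f0: "poly (map_poly of_rat f) \<theta> = 0"
    and D0: "poly (map_poly of_rat D) \<theta> = 0" and Dnz: "D \<noteq> 0"
  shows "degree f \<le> degree D"
proof -
  define g where "g = gcd f D"
  have bz: "fst (bezout_coefficients f D) * f + snd (bezout_coefficients f D) * D = g"
    unfolding g_def by (rule bezout_coefficients_fst_snd)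
  have g0: "poly (map_poly of_rat g) \<theta> = 0"
    by (simp flip: bz add: map_rat_add map_rat_mult f0 D0)
  have "g dvd f" unfolding g_def by simp
  then obtain k where fk: "f = g * k" by (auto elim: dvdE)
  from irreducibleD[OF irr fk] have "is_unit g \<or> is_unit k" .
  then show ?thesis
  proof
    assume "is_unit g"
    then obtain e where e: "g = [:e:]" "e dvd 1" using is_unit_poly_iff by blast
    then have "e \<noteq> 0" by auto
    then show ?thesis using g0 e by (simp add: map_poly_pCons)
  next
    assume "is_unit k"
    then obtain k' where "k * k' = 1" by (auto elim: dvdE simp: dvd_def) 
    then have "g = f * k'" using fk by (metis mult.assoc mult.right_neutral)
    then have "f dvd g" by simp
    also have "g dvd D" unfolding g_def by simp
    finally show ?thesis using Dnz by (rule dvd_imp_degree_le)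
  qed
qed

theorem mainTheorem4:
  fixes a b :: int
  assumes "\<exists>c::int. b = c ^ 2"
    and "monogenic (F_poly a b)"
  shows "b = 1"
proof -
  obtain c :: int where bc: "b = c ^ 2" using assms(1) by blast
  define FQ where "FQ = map_poly (of_int :: int \<Rightarrow> rat) (F_poly a b)"
  have mono: "lead_coeff (F_poly a b) = 1" and irr: "irreducible FQ"
    and ring: "\<And>\<theta>::complex. poly (map_poly of_int (F_poly a b)) \<theta> = 0 \<Longrightarrow>
        int_adjoin \<theta> = ring_of_integers \<theta>"
    using assms(2) unfolding monogenic_def FQ_def by auto
  have FQ_eq: "FQ = [:of_int b, 0, 0, 0, of_int a, 0, 0, 0, 1:]"
    unfolding FQ_def F_poly_def by (simp add: map_poly_pCons)
  have c0: "c \<noteq> 0"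
  proof
    assume "c = 0"
    then have "FQ = [:0, 1:] * [:0, 0, 0, of_int a, 0, 0, 0, 1:]"
      using FQ_eq bc by simp
    from irreducibleD[OF irr this] show False
      by (auto simp: is_unit_poly_iff)
  qed
  have FC_eq: "map_poly (of_int :: int \<Rightarrow> complex) (F_poly a b)
      = [:of_int b, 0, 0, 0, of_int a, 0, 0, 0, 1:]"
    unfolding F_poly_def by (simp add: map_poly_pCons)
  have "\<exists>z. poly (map_poly (of_int :: int \<Rightarrow> complex) (F_poly a b)) z = 0"
    unfolding FC_eq by (rule fundamental_theorem_of_algebra_alt) simp
  then obtain \<theta> :: complex where th: "poly (map_poly of_int (F_poly a b)) \<theta> = 0" by blast
  have FQC: "map_poly of_rat FQ = map_poly (of_int :: int \<Rightarrow> complex) (F_poly a b)"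
    unfolding FQ_def by (simp add: map_poly_map_poly o_def)
  have eq8: "\<theta>^8 + of_int a * \<theta>^4 + of_int c ^ 2 = 0"
    using th unfolding FC_eq by (simp add: bc algebra_simps eval_nat_numeral)
  define T :: "rat poly" where "T = [:0, 0, of_int (c - a) / of_int c, 0, 0, 0, - 1 / of_int c:]"
  define \<alpha> where "\<alpha> = poly (map_poly of_rat T) \<theta>"
  have cC: "(of_int c :: complex) \<noteq> 0" using c0 by simp
  have \<alpha>_eq: "of_int c * \<alpha> = of_int (c - a) * \<theta>^2 - \<theta>^6"
    unfolding \<alpha>_def T_def using cC
    by (simp add: map_poly_pCons of_rat_divide of_rat_diff of_rat_minus field_simps eval_nat_numeral)
  have "(of_int c * \<alpha>)^2 = of_int c ^ 2 * (of_int (2*c - a))"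
  proof -
    have "(of_int c * \<alpha>)^2 = (of_int (c - a) * \<theta>^2 - \<theta>^6)^2" by (simp add: \<alpha>_eq)
    also have "\<dots> = (\<theta>^4 + of_int a - 2 * of_int c) * (\<theta>^8 + of_int a * \<theta>^4 + of_int c ^ 2)
       + of_int c ^ 2 * (of_int (2*c - a))"
      by (simp add: algebra_simps eval_nat_numeral)
    finally show ?thesis using eq8 by simp
  qed
  then have a2: "\<alpha>^2 = of_int (2*c - a)" using cC by (simp add: power_mult_distrib)
  have "algebraic_int \<alpha>"
  proof (rule algebraic_int.intros[of "[:- of_int (2*c - a), 0, 1:]"])
    show "\<forall>i. coeff [:- of_int (2*c - a), 0, 1:] i \<in> \<int>"
      by (auto simp: coeff_pCons split: nat.splits)
  qed (use a2 in \<open>auto simp: power2_eq_square\<close>)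
  moreover have "\<alpha> \<in> rat_adjoin \<theta>" unfolding rat_adjoin_def \<alpha>_def by blast
  ultimately have "\<alpha> \<in> int_adjoin \<theta>" using ring[OF th] unfolding ring_of_integers_def by blast
  then obtain p :: "int poly" where p: "\<alpha> = poly (map_poly of_int p) \<theta>"
    unfolding int_adjoin_def by blast
  obtain q r where qr: "pseudo_divmod p (F_poly a b) = (q, r)" by force
  have Fnz: "F_poly a b \<noteq> 0" using mono by auto
  have dF: "degree (F_poly a b) = 8" unfolding F_poly_def by (simp add: map_poly_pCons)
  from pseudo_divmod[OF Fnz qr] mono
  have pqr: "p = F_poly a b * q + r" and rdeg: "r = 0 \<or> degree r < 8" by (auto simp: dF)
  have ar: "\<alpha> = poly (map_poly of_int r) \<theta>"
    using p th by (simp add: pqr map_int_add map_int_mult)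
  define D where "D = map_poly (of_int :: int \<Rightarrow> rat) r - T"
  have D0: "poly (map_poly of_rat D) \<theta> = 0"
    unfolding D_def map_rat_diff using ar \<alpha>_def
    by (simp add: map_poly_map_poly o_def)
  have "D = 0"
  proof (rule ccontr)
    assume "D \<noteq> 0"
    from irred_deg[OF irr _ D0 this] th FQC have "degree FQ \<le> degree D" by simp
    moreover have "degree FQ = 8" unfolding FQ_eq by simp
    moreover have "degree D < 8"
    proof -
      have "degree (map_poly (of_int :: int \<Rightarrow> rat) r) < 8" using rdeg
        by (auto simp: degree_map_poly)
      moreover have "degree T < 8" unfolding T_def by simp
      ultimately show ?thesis unfolding D_def
        by (rule degree_diff_less)
    qed
    ultimately show False by simp
  qed
  then have "coeff D 6 = 0" by simp
  then have "(of_int (coeff r 6) :: rat) = - 1 / of_int c"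
    unfolding D_def T_def by (simp add: coeff_map_poly numeral_eq_Suc)
  then have "(of_int (coeff r 6 * c) :: rat) = - 1" using c0 by (simp add: field_simps)
  then have "coeff r 6 * c = -1" by linarith
  then have "c dvd 1" by (metis dvd_minus_iff dvd_triv_right)
  then have "c^2 = 1" by (metis is_unit_power_iff power2_eq_square zdvd1_eq abs_mult_self_eq one_power2 power2_abs)
  then show ?thesis using bc by simp
qed

end
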